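(* Let $\Gamma_1=(V_1,E_1)$ be a graph of maximum degree $\Delta_1$ and let $\Gamma_2=(V_2,E_2)$ be a graph of maximum degree $\Delta_2$ and minimum degree $\delta_2$. Let $S\subseteq V_1$. (i) If $S$ is a global offensive $k$-alliance in $\Gamma_1$, then $S\times V_2$ is a global offensive $(k-\Delta_2)$-alliance in $\Gamma_1\times\Gamma_2$. (ii) If $S\times V_2$ is a global offensive $k$-alliance in $\Gamma_1\times\Gamma_2$, then $S$ is a global offensive $(k+\delta_2)$-alliance in $\Gamma_1$; moreover, $k\le\Delta_1-\delta_2$.
   Context: Graphs are finite and simple. In a graph $G=(V,E)$, for $S\subseteq V$ and $v\in V$, $\delta_S(v)$ is the number of neighbours of $v$ in $S$, $\overline{S}=V\setminus S$, and $\partial(S)$ the set of vertices of $\overline{S}$ with a neighbour in $S$. A nonempty $S$ is an offensive $k$-alliance in $G$ if $\delta_S(v)\ge\delta_{\overline{S}}(v)+k$ for every $v\in\partial(S)$, and a global offensive $k$-alliance if moreover it is dominating (every vertex of $\overline{S}$ has a neighbour in $S$). The Cartesian product $\Gamma_1\times\Gamma_2$ has vertex set $V_1\times V_2$, with $(u,v)\sim(u',v')$ iff either $u=u'$ and $v\sim v'$, or $v=v'$ and $u\sim u'$. *)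

theory Defs
  imports Main
begin

definition graph :: "'a set \<Rightarrow> ('a \<Rightarrow> 'a \<Rightarrow> bool) \<Rightarrow> bool" where
  "graph V E \<longleftrightarrow> finite V \<and> V \<noteq> {} \<and> (\<forall>u v. E u v \<longrightarrow> u \<in> V \<and> v \<in> V)
     \<and> (\<forall>u v. E u v \<longrightarrow> E v u) \<and> (\<forall>v. \<not> E v v)"

definition nbrs_in :: "('a \<Rightarrow> 'a \<Rightarrow> bool) \<Rightarrow> 'a set \<Rightarrow> 'a \<Rightarrow> nat" where
  "nbrs_in E S v = card {u \<in> S. E v u}"

definition degree :: "'a set \<Rightarrow> ('a \<Rightarrow> 'a \<Rightarrow> bool) \<Rightarrow> 'a \<Rightarrow> nat" where
  "degree V E v = nbrs_in E V v"

definition max_degree :: "'a set \<Rightarrow> ('a \<Rightarrow> 'a \<Rightarrow> bool) \<Rightarrow> nat" where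
  "max_degree V E = Max (degree V E ` V)"

definition min_degree :: "'a set \<Rightarrow> ('a \<Rightarrow> 'a \<Rightarrow> bool) \<Rightarrow> nat" where
  "min_degree V E = Min (degree V E ` V)"

definition boundary :: "'a set \<Rightarrow> ('a \<Rightarrow> 'a \<Rightarrow> bool) \<Rightarrow> 'a set \<Rightarrow> 'a set" where
  "boundary V E S = {v \<in> V - S. \<exists>u \<in> S. E v u}"

definition offensive_alliance :: "'a set \<Rightarrow> ('a \<Rightarrow> 'a \<Rightarrow> bool) \<Rightarrow> int \<Rightarrow> 'a set \<Rightarrow> bool" where
  "offensive_alliance V E k S \<longleftrightarrow> S \<noteq> {} \<and> S \<subseteq> V \<and>
     (\<forall>v \<in> boundary V E S. int (nbrs_in E S v) \<ge> int (nbrs_in E (V - S) v) + k)"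

definition dominating :: "'a set \<Rightarrow> ('a \<Rightarrow> 'a \<Rightarrow> bool) \<Rightarrow> 'a set \<Rightarrow> bool" where
  "dominating V E S \<longleftrightarrow> (\<forall>v \<in> V - S. \<exists>u \<in> S. E v u)"

definition global_offensive_alliance :: "'a set \<Rightarrow> ('a \<Rightarrow> 'a \<Rightarrow> bool) \<Rightarrow> int \<Rightarrow> 'a set \<Rightarrow> bool" where
  "global_offensive_alliance V E k S \<longleftrightarrow> offensive_alliance V E k S \<and> dominating V E S"

definition cart_edge :: "('a \<Rightarrow> 'a \<Rightarrow> bool) \<Rightarrow> ('b \<Rightarrow> 'b \<Rightarrow> bool) \<Rightarrow> 'a \<times> 'b \<Rightarrow> 'a \<times> 'b \<Rightarrow> bool" where
  "cart_edge E1 E2 x y \<longleftrightarrow>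
     (fst x = fst y \<and> E2 (snd x) (snd y)) \<or> (snd x = snd y \<and> E1 (fst x) (fst y))"

end

theory Submission
  imports Defs
begin

lemma nb_in:
  assumes "a \<notin> S" "b \<in> V2"
  shows "nbrs_in (cart_edge E1 E2) (S \<times> V2) (a,b) = nbrs_in E1 S a"
proof -
  have "{u \<in> S \<times> V2. cart_edge E1 E2 (a,b) u} = (\<lambda>x. (x,b)) ` {u \<in> S. E1 a u}"
    using assms by (auto simp: cart_edge_def)
  moreover have "inj_on (\<lambda>x. (x,b)) {u \<in> S. E1 a u}" by (auto simp: inj_on_def)
  ultimately show ?thesis unfolding nbrs_in_def by (simp add: card_image)
qed

lemma nb_out:
  assumes g1: "graph V1 E1" and g2: "graph V2 E2" and "a \<in> V1" "a \<notin> S" "b \<in> V2"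
  shows "nbrs_in (cart_edge E1 E2) (V1 \<times> V2 - S \<times> V2) (a,b)
         = nbrs_in E1 (V1 - S) a + degree V2 E2 b"
proof -
  have f1: "finite V1" and f2: "finite V2" and irr: "\<And>v. \<not> E1 v v"
    using g1 g2 by (auto simp: graph_def)
  have "{u \<in> V1 \<times> V2 - S \<times> V2. cart_edge E1 E2 (a,b) u}
     = (\<lambda>x. (x,b)) ` {u \<in> V1 - S. E1 a u} \<union> Pair a ` {u \<in> V2. E2 b u}"
    using assms by (auto simp: cart_edge_def)
  moreover have "(\<lambda>x. (x,b)) ` {u \<in> V1 - S. E1 a u} \<inter> Pair a ` {u \<in> V2. E2 b u} = {}"
    using irr by auto
  moreover have "inj_on (\<lambda>x. (x,b)) {u \<in> V1 - S. E1 a u}" by (auto simp: inj_on_def)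
  moreover have "inj_on (Pair a) {u \<in> V2. E2 b u}" by (auto simp: inj_on_def)
  moreover have "finite {u \<in> V1 - S. E1 a u}" "finite {u \<in> V2. E2 b u}" using f1 f2 by auto
  ultimately show ?thesis unfolding nbrs_in_def degree_def
    by (simp add: card_Un_disjoint card_image)
qed

theorem mainTheorem13:
  fixes V1 :: "'a set" and E1 :: "'a \<Rightarrow> 'a \<Rightarrow> bool"
    and V2 :: "'b set" and E2 :: "'b \<Rightarrow> 'b \<Rightarrow> bool"
    and S :: "'a set" and k :: int
  assumes "graph V1 E1" and "graph V2 E2" and "S \<subseteq> V1"
  shows "(global_offensive_alliance V1 E1 k S \<longrightarrow>
           global_offensive_alliance (V1 \<times> V2) (cart_edge E1 E2)
             (k - int (max_degree V2 E2)) (S \<times> V2))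
       \<and> (global_offensive_alliance (V1 \<times> V2) (cart_edge E1 E2) k (S \<times> V2) \<longrightarrow>
           global_offensive_alliance V1 E1 (k + int (min_degree V2 E2)) S
           \<and> (S \<noteq> V1 \<longrightarrow> k \<le> int (max_degree V1 E1) - int (min_degree V2 E2)))"
proof -
  note g1 = assms(1) and g2 = assms(2)
  have f1: "finite V1" and f2: "finite V2" and ne2: "V2 \<noteq> {}"
    using g1 g2 by (auto simp: graph_def)
  have maxd: "\<And>b. b \<in> V2 \<Longrightarrow> degree V2 E2 b \<le> max_degree V2 E2"
    unfolding max_degree_def using f2 by auto
  have maxd1: "\<And>b. b \<in> V1 \<Longrightarrow> degree V1 E1 b \<le> max_degree V1 E1"
    unfolding max_degree_def using f1 by auto
  obtain b0 where b0: "b0 \<in> V2" "degree V2 E2 b0 = min_degree V2 E2"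
  proof -
    have "min_degree V2 E2 \<in> degree V2 E2 ` V2"
      unfolding min_degree_def using f2 ne2 by (intro Min_in) auto
    then show ?thesis using that by auto
  qed
  have bd: "\<And>a b. (a,b) \<in> boundary (V1 \<times> V2) (cart_edge E1 E2) (S \<times> V2) \<longleftrightarrow>
       a \<in> boundary V1 E1 S \<and> b \<in> V2"
    unfolding boundary_def cart_edge_def by auto
  have part1: "global_offensive_alliance V1 E1 k S \<longrightarrow>
           global_offensive_alliance (V1 \<times> V2) (cart_edge E1 E2)
             (k - int (max_degree V2 E2)) (S \<times> V2)"
  proof
    assume A: "global_offensive_alliance V1 E1 k S"
    have "\<forall>v \<in> boundary (V1 \<times> V2) (cart_edge E1 E2) (S \<times> V2).
        int (nbrs_in (cart_edge E1 E2) (S \<times> V2) v) \<ge>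
        int (nbrs_in (cart_edge E1 E2) (V1 \<times> V2 - S \<times> V2) v) + (k - int (max_degree V2 E2))"
    proof
      fix v assume v: "v \<in> boundary (V1 \<times> V2) (cart_edge E1 E2) (S \<times> V2)"
      obtain a b where ab: "v = (a,b)" by fastforce
      have a: "a \<in> boundary V1 E1 S" "b \<in> V2" using v bd ab by auto
      hence aa: "a \<in> V1" "a \<notin> S" by (auto simp: boundary_def)
      have "int (nbrs_in E1 S a) \<ge> int (nbrs_in E1 (V1 - S) a) + k"
        using A a unfolding global_offensive_alliance_def offensive_alliance_def by blast
      thus "int (nbrs_in (cart_edge E1 E2) (S \<times> V2) v) \<ge>
        int (nbrs_in (cart_edge E1 E2) (V1 \<times> V2 - S \<times> V2) v) + (k - int (max_degree V2 E2))"
        using nb_in[OF aa(2) a(2)] nb_out[OF g1 g2 aa a(2)] maxd[OF a(2)] ab by simp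
    qed
    moreover have "dominating (V1 \<times> V2) (cart_edge E1 E2) (S \<times> V2)"
      using A unfolding global_offensive_alliance_def dominating_def cart_edge_def by fastforce
    moreover have "S \<times> V2 \<noteq> {}" using A ne2
      unfolding global_offensive_alliance_def offensive_alliance_def by auto
    ultimately show "global_offensive_alliance (V1 \<times> V2) (cart_edge E1 E2)
             (k - int (max_degree V2 E2)) (S \<times> V2)"
      using assms(3) unfolding global_offensive_alliance_def offensive_alliance_def by auto
  qed
  have part2: "global_offensive_alliance (V1 \<times> V2) (cart_edge E1 E2) k (S \<times> V2) \<longrightarrow>
           global_offensive_alliance V1 E1 (k + int (min_degree V2 E2)) S
           \<and> (S \<noteq> V1 \<longrightarrow> k \<le> int (max_degree V1 E1) - int (min_degree V2 E2))"
  proof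
    assume A: "global_offensive_alliance (V1 \<times> V2) (cart_edge E1 E2) k (S \<times> V2)"
    have key: "\<forall>a \<in> boundary V1 E1 S.
        int (nbrs_in E1 S a) \<ge> int (nbrs_in E1 (V1 - S) a) + (k + int (min_degree V2 E2))"
    proof
      fix a assume a: "a \<in> boundary V1 E1 S"
      hence aa: "a \<in> V1" "a \<notin> S" by (auto simp: boundary_def)
      have "(a,b0) \<in> boundary (V1 \<times> V2) (cart_edge E1 E2) (S \<times> V2)" using bd a b0 by auto
      hence "int (nbrs_in (cart_edge E1 E2) (S \<times> V2) (a,b0)) \<ge>
        int (nbrs_in (cart_edge E1 E2) (V1 \<times> V2 - S \<times> V2) (a,b0)) + k"
        using A unfolding global_offensive_alliance_def offensive_alliance_def by blast
      thus "int (nbrs_in E1 S a) \<ge> int (nbrs_in E1 (V1 - S) a) + (k + int (min_degree V2 E2))"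
        using nb_in[OF aa(2) b0(1)] nb_out[OF g1 g2 aa b0(1)] b0(2) by simp
    qed
    have dom: "dominating V1 E1 S"
      unfolding dominating_def
    proof
      fix a assume a: "a \<in> V1 - S"
      hence "(a,b0) \<in> V1 \<times> V2 - S \<times> V2" using b0 by auto
      then obtain u where "u \<in> S \<times> V2" "cart_edge E1 E2 (a,b0) u"
        using A unfolding global_offensive_alliance_def dominating_def by blast
      thus "\<exists>u\<in>S. E1 a u" using a by (auto simp: cart_edge_def)
    qed
    have Sne: "S \<noteq> {}" using A
      unfolding global_offensive_alliance_def offensive_alliance_def by auto
    have G: "global_offensive_alliance V1 E1 (k + int (min_degree V2 E2)) S"
      using key dom Sne assms(3)
      unfolding global_offensive_alliance_def offensive_alliance_def by auto
    have "S \<noteq> V1 \<longrightarrow> k \<le> int (max_degree V1 E1) - int (min_degree V2 E2)"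
    proof
      assume "S \<noteq> V1"
      then obtain a where a: "a \<in> V1" "a \<notin> S" using assms(3) by auto
      hence ab: "a \<in> boundary V1 E1 S" using dom unfolding dominating_def boundary_def by auto
      have "nbrs_in E1 S a \<le> degree V1 E1 a"
        unfolding nbrs_in_def degree_def using f1 assms(3) by (intro card_mono) auto
      thus "k \<le> int (max_degree V1 E1) - int (min_degree V2 E2)"
        using key ab maxd1[OF a(1)] by fastforce
    qed
    with G show "global_offensive_alliance V1 E1 (k + int (min_degree V2 E2)) S
           \<and> (S \<noteq> V1 \<longrightarrow> k \<le> int (max_degree V1 E1) - int (min_degree V2 E2))" by blast
  qed
  show ?thesis using part1 part2 by blast
qed

end
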